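(* Let $\mathfrak p$ be a probability distribution supported by $\mathbb N$ and let $B\subseteq\mathbb N^{\mathbb N}$ be the set of bounded sequences. Then $\dim_H\pi_{\mathfrak p}(B)=1$.
   Context: $\mathbb N=\{1,2,3,\dots\}$. A probability distribution $\mathfrak p=(p_i)_{i\in\mathbb N}$ is supported by $\mathbb N$ if $p_i\in(0,1)$ for all $i$ and $\sum_{i=1}^\infty p_i=1$. Set $\widehat{p_1}=0$ and $\widehat{p_n}=\sum_{i=1}^{n-1}p_i$ for $n\ge 2$. For $n\in\mathbb N$ let $T_n x=p_n x+\widehat{p_n}$. Define $\pi_{\mathfrak p}:\mathbb N^{\mathbb N}\to[0,1)$ by $\pi_{\mathfrak p}((n_j))=\lim_{j\to\infty}T_{n_1}\circ\cdots\circ T_{n_j}(0)=\widehat{p_{n_1}}+\sum_{j=1}^\infty p_{n_1}\cdots p_{n_j}\widehat{p_{n_{j+1}}}$. $\dim_H$ denotes Hausdorff dimension. *)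

theory Defs
  imports "HOL-Analysis.Analysis"
begin

text \<open>Probability distribution supported by N = {1,2,...}; p is indexed from 1
  (the value p 0 is irrelevant).\<close>
definition prob_supported_by_N :: "(nat \<Rightarrow> real) \<Rightarrow> bool" where
  "prob_supported_by_N p \<longleftrightarrow> (\<forall>i\<ge>1. 0 < p i \<and> p i < 1) \<and> ((\<lambda>i. p (Suc i)) sums 1)"

definition phat :: "(nat \<Rightarrow> real) \<Rightarrow> nat \<Rightarrow> real" where
  "phat p n = (\<Sum>i\<in>{1..<n}. p i)"

text \<open>Sequences (n_j)_{j>=1} in N^N are represented as ns :: nat => nat with
  ns k = n_{k+1} and all values >= 1.\<close>
definition seqN :: "(nat \<Rightarrow> nat) set" where
  "seqN = {ns. \<forall>k. ns k \<ge> 1}"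

definition pi_p :: "(nat \<Rightarrow> real) \<Rightarrow> (nat \<Rightarrow> nat) \<Rightarrow> real" where
  "pi_p p ns = phat p (ns 0) + (\<Sum>j. (\<Prod>k\<le>j. p (ns k)) * phat p (ns (Suc j)))"

definition bounded_seqs :: "(nat \<Rightarrow> nat) set" where
  "bounded_seqs = {ns \<in> seqN. \<exists>M. \<forall>k. ns k \<le> M}"

definition hausdorff_delta :: "real \<Rightarrow> real \<Rightarrow> real set \<Rightarrow> ennreal" where
  "hausdorff_delta s \<delta> E = (INF U \<in> {U :: nat \<Rightarrow> real set.
       E \<subseteq> (\<Union>i. U i) \<and> (\<forall>i. bounded (U i) \<and> diameter (U i) \<le> \<delta>)}.
       (\<Sum>i. ennreal (diameter (U i) powr s)))"

definition hausdorff_measure :: "real \<Rightarrow> real set \<Rightarrow> ennreal" where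
  "hausdorff_measure s E = (SUP \<delta> \<in> {0<..}. hausdorff_delta s \<delta> E)"

text \<open>Hausdorff dimension: inf of s > 0 with H^s(E) = 0 (for subsets of R this
  set contains (1,infinity), hence is nonempty; Inf of (0,infinity) is 0).\<close>
definition hausdorff_dim :: "real set \<Rightarrow> real" where
  "hausdorff_dim E = Inf {s. s > 0 \<and> hausdorff_measure s E = 0}"

end

theory Submission
  imports Defs "HOL-Library.Sublist"
begin


fun aw :: "(nat \<Rightarrow> real) \<Rightarrow> nat list \<Rightarrow> real" where
  "aw p [] = 0" | "aw p (x # w) = phat p x + p x * aw p w"
fun pw :: "(nat \<Rightarrow> real) \<Rightarrow> nat list \<Rightarrow> real" where
  "pw p [] = 1" | "pw p (x # w) = p x * pw p w"

definition pre :: "(nat \<Rightarrow> nat) \<Rightarrow> nat \<Rightarrow> nat list" where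
  "pre w k = map w [0..<k]"

definition shk :: "nat \<Rightarrow> (nat \<Rightarrow> nat) \<Rightarrow> (nat \<Rightarrow> nat)" where
  "shk k w = (\<lambda>j. w (j + k))"

lemma pre_Suc: "pre w (Suc k) = w 0 # pre (shk 1 w) k"
  unfolding pre_def shk_def by (induction k) auto

lemma pre_Suc2: "pre w (Suc k) = pre w k @ [w k]"
  unfolding pre_def by simp

lemma aw_append: "aw p (u @ v) = aw p u + pw p u * aw p v"
  by (induction u) (auto simp: algebra_simps)
lemma pw_append: "pw p (u @ v) = pw p u * pw p v"
  by (induction u) auto

definition dpath :: "nat \<Rightarrow> (nat \<Rightarrow> nat) \<Rightarrow> bool" where
  "dpath M w \<longleftrightarrow> (\<forall>k. 1 \<le> w k \<and> w k \<le> M)"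

context fixes p :: "nat \<Rightarrow> real" assumes P: "prob_supported_by_N p"
begin

lemma p_pos: "0 < n \<Longrightarrow> 0 < p n" and p_lt1: "0 < n \<Longrightarrow> p n < 1"
  using P unfolding prob_supported_by_N_def by auto
lemma p_nonneg: "0 < n \<Longrightarrow> 0 \<le> p n" using p_pos less_imp_le by blast

lemma phat_nonneg: "0 \<le> phat p n"
  unfolding phat_def by (rule sum_nonneg) (auto intro: p_nonneg)

lemma phat_le1: "phat p n \<le> 1"
proof -
  have s: "(\<lambda>i. p (Suc i)) sums 1" using P unfolding prob_supported_by_N_def by auto
  have "phat p n = (\<Sum>i<n - 1. p (Suc i))"
    unfolding phat_def
  proof (cases n)
    case 0 then show "sum p {1..<n} = (\<Sum>i<n - 1. p (Suc i))" by simp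
  next
    case (Suc m)
    then show "sum p {1..<n} = (\<Sum>i<n - 1. p (Suc i))"
      using sum.shift_bounds_Suc_ivl[of p 0 m] by (simp add: atLeast0LessThan)
  qed
  also have "\<dots> \<le> (\<Sum>i. p (Suc i))"
    by (rule sum_le_suminf) (use s p_nonneg in \<open>auto simp: sums_iff\<close>)
  finally show ?thesis using s by (simp add: sums_iff)
qed

lemma phat_Suc: "1 \<le> n \<Longrightarrow> phat p (Suc n) = phat p n + p n"
  unfolding phat_def by (simp add: sum.atLeastLessThan_Suc)

lemma phat_p_le1: "1 \<le> n \<Longrightarrow> phat p n + p n \<le> 1"
  using phat_Suc phat_le1 by metis

lemma phat_mono: "i \<le> j \<Longrightarrow> phat p i \<le> phat p j"
  unfolding phat_def by (rule sum_mono2) (auto intro: p_nonneg)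

lemma phat_lt: "1 \<le> i \<Longrightarrow> i < j \<Longrightarrow> phat p i + p i \<le> phat p j"
  using phat_Suc phat_mono by (metis Suc_leI)

lemma pw_pos: "\<forall>x\<in>set w. 1 \<le> x \<Longrightarrow> 0 < pw p w"
  by (induction w) (auto intro!: p_pos mult_pos_pos)

lemma aw_bounds: "\<forall>x\<in>set w. 1 \<le> x \<Longrightarrow> 0 \<le> aw p w \<and> aw p w + pw p w \<le> 1"
proof (induction w)
  case Nil then show ?case by simp
next
  case (Cons x w)
  have px: "0 < p x" "phat p x + p x \<le> 1" using Cons p_pos phat_p_le1 by auto
  have "aw p (x # w) + pw p (x # w) = phat p x + p x * (aw p w + pw p w)"
    by (simp add: algebra_simps)
  also have "\<dots> \<le> phat p x + p x * 1"
    using Cons px by (intro add_left_mono mult_left_mono) auto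
  finally show ?case using Cons px phat_nonneg by simp
qed

lemma pw_le1: "\<forall>x\<in>set w. 1 \<le> x \<Longrightarrow> pw p w \<le> 1"
  using aw_bounds by (smt (verit))


definition qM :: "nat \<Rightarrow> real" where "qM M = Max (p ` {1..M})"

lemma qM_lt1: "1 \<le> M \<Longrightarrow> qM M < 1"
  unfolding qM_def by (subst Max_less_iff) (auto intro: p_lt1)
lemma qM_ge: "1 \<le> i \<Longrightarrow> i \<le> M \<Longrightarrow> p i \<le> qM M"
  unfolding qM_def by (rule Max_ge) auto

lemma path_M: "dpath M w \<Longrightarrow> 1 \<le> M"
  unfolding dpath_def by (meson order_trans)
lemma path_pos: "dpath M w \<Longrightarrow> 0 < w k"
  unfolding dpath_def by (metis One_nat_def Suc_le_eq)
lemma path_shk: "dpath M w \<Longrightarrow> dpath M (shk k w)"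
  unfolding dpath_def shk_def by auto
lemma path_pre: "dpath M w \<Longrightarrow> \<forall>x\<in>set (pre w k). 1 \<le> x \<and> x \<le> M"
  unfolding dpath_def pre_def by auto

lemma prod_path_bound: "dpath M w \<Longrightarrow> (\<Prod>k\<le>j. p (w k)) \<le> qM M ^ Suc j"
proof -
  assume pa: "dpath M w"
  have "(\<Prod>k\<le>j. p (w k)) \<le> (\<Prod>k\<le>j. qM M)"
    by (rule prod_mono) (use pa path_pos[OF pa] in \<open>auto simp: dpath_def intro: p_nonneg qM_ge\<close>)
  then show ?thesis by simp
qed

lemma prod_path_nonneg: "dpath M w \<Longrightarrow> 0 \<le> (\<Prod>k\<le>j. p (w k))"
  by (rule prod_nonneg) (auto intro: p_nonneg path_pos)

lemma pi_summable: "dpath M w \<Longrightarrow> summable (\<lambda>j. (\<Prod>k\<le>j. p (w k)) * phat p (w (Suc j)))"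
proof -
  assume pa: "dpath M w"
  have M: "1 \<le> M" using path_M pa by blast
  have q0: "0 \<le> qM M" using qM_ge[of 1 M] p_pos[of 1] M by linarith
  show ?thesis
  proof (rule summable_comparison_test)
    show "summable (\<lambda>j. qM M ^ Suc j)"
      using qM_lt1[OF M] q0 by (simp add: summable_geometric)
    show "\<exists>N. \<forall>n\<ge>N. norm ((\<Prod>k\<le>n. p (w k)) * phat p (w (Suc n))) \<le> qM M ^ Suc n"
    proof (intro exI allI impI)
      fix n
      have "(\<Prod>k\<le>n. p (w k)) * phat p (w (Suc n)) \<le> qM M ^ Suc n * 1"
        by (intro mult_mono prod_path_bound pa phat_le1 phat_nonneg) (use q0 in auto)
      then show "norm ((\<Prod>k\<le>n. p (w k)) * phat p (w (Suc n))) \<le> qM M ^ Suc n"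
        using prod_path_nonneg[OF pa, of n] phat_nonneg by simp
    qed
  qed
qed

lemma pi_step: "dpath M w \<Longrightarrow> pi_p p w = phat p (w 0) + p (w 0) * pi_p p (shk 1 w)"
proof -
  assume pa: "dpath M w"
  let ?f = "\<lambda>j. (\<Prod>k\<le>j. p (w k)) * phat p (w (Suc j))"
  let ?g = "\<lambda>j. (\<Prod>k\<le>j. p (shk 1 w k)) * phat p (shk 1 w (Suc j))"
  have sf: "summable ?f" using pi_summable pa by blast
  have sg: "summable ?g" using pi_summable path_shk pa by blast
  have fs: "?f (Suc j) = p (w 0) * ?g j" for j
    by (simp only: prod.atMost_Suc_shift) (simp add: shk_def)
  have "(\<Sum>j. ?f j) = ?f 0 + (\<Sum>j. ?f (Suc j))"
    using suminf_split_head[OF sf] by simp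
  also have "(\<Sum>j. ?f (Suc j)) = p (w 0) * (\<Sum>j. ?g j)"
    unfolding fs using suminf_mult[OF sg] by simp
  finally show ?thesis
    unfolding pi_p_def by (simp add: shk_def algebra_simps)
qed

lemma pi_bounds: "dpath M w \<Longrightarrow> 0 \<le> pi_p p w \<and> pi_p p w \<le> 1"
proof -
  assume pa: "dpath M w"
  let ?P = "\<lambda>j. (\<Prod>k\<le>j. p (w k))"
  let ?f = "\<lambda>j. ?P j * phat p (w (Suc j))"
  have sf: "summable ?f" using pi_summable pa by blast
  have w1: "0 < w k" for k using pa unfolding dpath_def by (metis One_nat_def Suc_le_eq)
  have f0: "0 \<le> ?f j" for j using prod_path_nonneg[OF pa] phat_nonneg by simp
  have tel: "(\<Sum>j<N. ?f j) \<le> ?P 0 - ?P N" for N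
  proof (induction N)
    case 0 then show ?case by simp
  next
    case (Suc N)
    have "?f N \<le> ?P N * (1 - p (w (Suc N)))"
      by (rule mult_left_mono[OF _ prod_path_nonneg[OF pa]]) (use phat_p_le1[of "w (Suc N)"] w1[of "Suc N"] in simp)
    also have "\<dots> = ?P N - ?P (Suc N)" by (simp add: algebra_simps)
    finally show ?case using Suc by simp
  qed
  have "(\<Sum>j. ?f j) \<le> ?P 0"
    by (rule suminf_le_const[OF sf]) (use tel prod_path_nonneg[OF pa] in \<open>smt (verit)\<close>)
  then have "pi_p p w \<le> phat p (w 0) + p (w 0)" unfolding pi_p_def by simp
  also have "\<dots> \<le> 1" using phat_p_le1 w1 by (simp add: Suc_leI)
  finally show ?thesis unfolding pi_p_def using suminf_nonneg[OF sf f0] phat_nonneg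
    by simp
qed

lemma shk_shk: "shk k (shk 1 w) = shk (Suc k) w"
  unfolding shk_def by auto

lemma pi_pre: "dpath M w \<Longrightarrow> pi_p p w = aw p (pre w k) + pw p (pre w k) * pi_p p (shk k w)"
proof (induction k arbitrary: w)
  case 0 then show ?case by (simp add: pre_def shk_def)
next
  case (Suc k)
  have "pi_p p w = phat p (w 0) + p (w 0) * pi_p p (shk 1 w)" using pi_step Suc by blast
  also have "pi_p p (shk 1 w) = aw p (pre (shk 1 w) k) + pw p (pre (shk 1 w) k) * pi_p p (shk (Suc k) w)"
    using Suc.IH[of "shk 1 w"] path_shk Suc.prems shk_shk by metis
  finally show ?case by (simp add: pre_Suc algebra_simps)
qed

lemma pi_in_cyl: "dpath M w \<Longrightarrow> aw p (pre w k) \<le> pi_p p w \<and> pi_p p w \<le> aw p (pre w k) + pw p (pre w k)"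
proof -
  assume pa: "dpath M w"
  have b: "0 \<le> pi_p p (shk k w)" "pi_p p (shk k w) \<le> 1" using pi_bounds[OF path_shk[OF pa]] by auto
  have pp: "0 < pw p (pre w k)" using pw_pos path_pre[OF pa] by (simp add: Suc_le_eq)
  show ?thesis unfolding pi_pre[OF pa, of k]
    using mult_left_mono[OF b(2) less_imp_le[OF pp]] mult_nonneg_nonneg[OF less_imp_le[OF pp] b(1)] by simp
qed

end


lemma packing:
  fixes a b :: "'a \<Rightarrow> real"
  assumes "finite W" "\<forall>w\<in>W. a w < b w"
    "\<forall>w\<in>W. \<forall>w'\<in>W. w \<noteq> w' \<longrightarrow> b w \<le> a w' \<or> b w' \<le> a w"
    "\<forall>w\<in>W. L \<le> a w \<and> b w \<le> R" "L \<le> R"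
  shows "(\<Sum>w\<in>W. b w - a w) \<le> R - L"
  using assms
proof (induction "card W" arbitrary: W R)
  case 0 then show ?case by simp
next
  case (Suc n)
  then have ne: "W \<noteq> {}" by auto
  have "Max (a ` W) \<in> a ` W" using Suc.prems(1) ne by (intro Max_in) auto
  then obtain x where x: "x \<in> W" "a x = Max (a ` W)" by auto
  have mx: "a w \<le> a x" if "w \<in> W" for w using x Suc.prems(1) that by simp
  have bw: "b w \<le> a x" if "w \<in> W - {x}" for w
  proof -
    have "b w \<le> a x \<or> b x \<le> a w" using Suc.prems(3) that x(1) by blast
    moreover have "\<not> b x \<le> a w" using mx[of w] Suc.prems(2) x(1) that by force
    ultimately show ?thesis by blast
  qed
  have "(\<Sum>w\<in>W - {x}. b w - a w) \<le> a x - L"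
    apply (rule Suc.hyps(1))
    using Suc.prems Suc.hyps(2) x(1) bw by (auto simp: card_Diff_singleton)
  moreover have "(\<Sum>w\<in>W. b w - a w) = (b x - a x) + (\<Sum>w\<in>W - {x}. b w - a w)"
    using Suc.prems(1) x(1) by (simp add: sum.remove)
  ultimately show ?case using Suc.prems(4) x(1) by force
qed

context fixes p :: "nat \<Rightarrow> real" assumes P: "prob_supported_by_N p"
begin

lemma cyl_order:
  assumes "\<forall>x\<in>set w. 1 \<le> x" "\<forall>x\<in>set w'. 1 \<le> x" "w \<parallel> w'"
  shows "aw p w + pw p w \<le> aw p w' \<or> aw p w' + pw p w' \<le> aw p w"
proof -
  have key: "aw p (u @ b # v) + pw p (u @ b # v) \<le> aw p (u @ c # v')"
    if "b < c" "\<forall>x\<in>set (u @ b # v). 1 \<le> x" "\<forall>x\<in>set (u @ c # v'). 1 \<le> x" for u b c v v'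
  proof -
    have pu: "0 \<le> pw p u" using pw_pos[OF P, of u] that by auto
    have b1: "1 \<le> b" using that by auto
    have pb: "0 \<le> p b" using p_nonneg[OF P, of b] b1 by auto
    have "aw p (b # v) + pw p (b # v) = phat p b + p b * (aw p v + pw p v)"
      by (simp add: algebra_simps)
    also have "\<dots> \<le> phat p b + p b * 1"
      using aw_bounds[OF P, of v] that pb by (intro add_left_mono mult_left_mono) auto
    also have "\<dots> \<le> phat p c" using phat_lt[OF P b1 that(1)] by simp
    also have "\<dots> \<le> aw p (c # v')"
      using aw_bounds[OF P, of v'] p_nonneg[OF P, of c] that by auto
    finally have "aw p (b # v) + pw p (b # v) \<le> aw p (c # v')" .
    then have "aw p u + pw p u * (aw p (b # v) + pw p (b # v)) \<le> aw p u + pw p u * aw p (c # v')"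
      using pu by (intro add_left_mono mult_left_mono) auto
    then show ?thesis by (simp add: aw_append pw_append algebra_simps)
  qed
  obtain u b v c v' where d: "b \<noteq> c" "w = u @ b # v" "w' = u @ c # v'"
    using parallel_decomp[OF assms(3)] by blast
  show ?thesis
  proof (cases "b < c")
    case True then show ?thesis using key assms d by blast
  next
    case False then have "c < b" using d by auto
    then show ?thesis using key assms d by blast
  qed
qed

lemma fan:
  assumes cov: "\<forall>w. dpath M w \<longrightarrow> (\<exists>k. pre w k \<in> S)"
  shows "\<exists>S0\<subseteq>S. finite S0 \<and> (\<forall>w. dpath M w \<longrightarrow> (\<exists>k. pre w k \<in> S0))"
proof (rule ccontr)
  define good where "good v \<longleftrightarrow> (\<exists>S0\<subseteq>S. finite S0 \<and>
      (\<forall>w. dpath M w \<and> pre w (length v) = v \<longrightarrow> (\<exists>k. pre w k \<in> S0)))" for v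
  assume "\<not> ?thesis"
  then have g0: "\<not> good []" unfolding good_def by (simp add: pre_def)
  have step: "\<exists>i\<in>{1..M}. \<not> good (v @ [i])" if "\<not> good v" for v
  proof (rule ccontr)
    assume "\<not> ?thesis"
    then have "\<forall>i\<in>{1..M}. \<exists>S0\<subseteq>S. finite S0 \<and>
      (\<forall>w. dpath M w \<and> pre w (length (v @ [i])) = v @ [i] \<longrightarrow> (\<exists>k. pre w k \<in> S0))"
      unfolding good_def by blast
    then obtain F where F: "\<forall>i\<in>{1..M}. F i \<subseteq> S \<and> finite (F i) \<and>
      (\<forall>w. dpath M w \<and> pre w (Suc (length v)) = v @ [i] \<longrightarrow> (\<exists>k. pre w k \<in> F i))"
      by (simp add: bchoice_iff) metis
    have "good v" unfolding good_def
    proof (intro exI[of _ "\<Union>i\<in>{1..M}. F i"] conjI allI impI)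
      show "(\<Union>i\<in>{1..M}. F i) \<subseteq> S" "finite (\<Union>i\<in>{1..M}. F i)" using F by auto
      fix w assume w: "dpath M w \<and> pre w (length v) = v"
      then have i: "w (length v) \<in> {1..M}" unfolding dpath_def by auto
      have "pre w (Suc (length v)) = v @ [w (length v)]" using w by (simp add: pre_Suc2)
      then show "\<exists>k. pre w k \<in> (\<Union>i\<in>{1..M}. F i)" using F i w by blast
    qed
    then show False using that by blast
  qed
  define g where "g v = (SOME i. i \<in> {1..M} \<and> \<not> good (v @ [i]))" for v
  have g: "g v \<in> {1..M} \<and> \<not> good (v @ [g v])" if "\<not> good v" for v
    using someI_ex[of "\<lambda>i. i \<in> {1..M} \<and> \<not> good (v @ [i])"] step[OF that]
    unfolding g_def by blast
  define W where "W = rec_nat [] (\<lambda>n v. v @ [g v])"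
  have W0: "W 0 = []" and WS: "W (Suc n) = W n @ [g (W n)]" for n unfolding W_def by auto
  have Wn: "\<not> good (W n) \<and> length (W n) = n" for n
    by (induction n) (use g0 g in \<open>auto simp: W0 WS\<close>)
  define om where "om n = g (W n)" for n
  have pom: "pre om n = W n" for n
    by (induction n) (auto simp: pre_def W0 WS om_def)
  have pa: "dpath M om" unfolding dpath_def om_def using g Wn by auto
  then obtain k where k: "pre om k \<in> S" using cov by blast
  have "good (W k)" unfolding good_def
    by (intro exI[of _ "{W k}"]) (use k pom Wn in auto)
  then show False using Wn by blast
qed

end

definition mu :: "(nat \<Rightarrow> real) \<Rightarrow> nat list \<Rightarrow> real" where
  "mu q w = prod_list (map q w)"

lemma mu_Nil[simp]: "mu q [] = 1" and mu_Cons[simp]: "mu q (i # w) = q i * mu q w"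
  by (auto simp: mu_def)

lemma mu_nonneg: "\<forall>i. 0 \<le> q i \<Longrightarrow> 0 \<le> mu q w"
  unfolding mu_def by (induction w) auto

lemma sum_cover:
  assumes q0: "\<forall>i. 0 \<le> q i" and q1: "(\<Sum>i\<in>{1..M}. q i) = 1" and M: "1 \<le> M"
  shows "finite S \<Longrightarrow> \<forall>w\<in>S. length w \<le> N \<Longrightarrow> \<forall>om. dpath M om \<longrightarrow> (\<exists>k. pre om k \<in> S)
     \<Longrightarrow> 1 \<le> (\<Sum>w\<in>S. mu q w)"
proof (induction N arbitrary: S)
  case 0
  have "dpath M (\<lambda>_. 1)" using M by (simp add: dpath_def)
  then obtain k where "pre (\<lambda>_. 1) k \<in> S" using 0 by blast
  then have "[] \<in> S" using 0 by (auto simp: pre_def)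
  then show ?case using member_le_sum[of "[]" S "mu q"] 0 mu_nonneg[OF q0] by simp
next
  case (Suc n)
  show ?case
  proof (cases "[] \<in> S")
    case True
    then show ?thesis using member_le_sum[of "[]" S "mu q"] Suc mu_nonneg[OF q0] by simp
  next
    case False
    define T where "T i = {v. i # v \<in> S}" for i
    have Tf: "finite (T i)" for i
    proof -
      have "T i \<subseteq> tl ` S" unfolding T_def by (auto intro: image_eqI[of _ tl "i # _"])
      then show ?thesis using finite_subset Suc.prems(1) by blast
    qed
    have T1: "1 \<le> (\<Sum>v\<in>T i. mu q v)" if i: "i \<in> {1..M}" for i
    proof (rule Suc.IH[OF Tf])
      show "\<forall>w\<in>T i. length w \<le> n" using Suc.prems(2) by (auto simp: T_def)
      show "\<forall>om. dpath M om \<longrightarrow> (\<exists>k. pre om k \<in> T i)"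
      proof (intro allI impI)
        fix om assume pa: "dpath M om"
        define om' where "om' j = (if j = 0 then i else om (j - 1))" for j
        have "dpath M om'" using pa i unfolding dpath_def om'_def by auto
        then obtain k where k: "pre om' k \<in> S" using Suc.prems(3) by blast
        then obtain k' where k': "k = Suc k'" using False by (cases k) (auto simp: pre_def)
        have "shk 1 om' = om" by (auto simp: shk_def om'_def)
        then have "pre om' k = i # pre om k'" using k' pre_Suc[of om' k'] by (simp add: om'_def)
        then show "\<exists>k. pre om k \<in> T i" using k by (auto simp: T_def)
      qed
    qed
    have "1 = (\<Sum>i\<in>{1..M}. q i * 1)" using q1 by simp
    also have "\<dots> \<le> (\<Sum>i\<in>{1..M}. q i * (\<Sum>v\<in>T i. mu q v))"
      by (rule sum_mono, rule mult_left_mono) (use T1 q0 in auto)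
    also have "\<dots> = (\<Sum>i\<in>{1..M}. (\<Sum>x\<in>Cons i ` T i. mu q x))"
      by (rule sum.cong) (auto simp: sum.reindex sum_distrib_left)
    also have "\<dots> = (\<Sum>x\<in>(\<Union>i\<in>{1..M}. Cons i ` T i). mu q x)"
      by (rule sum.UNION_disjoint[symmetric]) (auto simp: Tf)
    also have "\<dots> \<le> (\<Sum>w\<in>S. mu q w)"
      by (rule sum_mono2[OF Suc.prems(1)]) (auto simp: T_def mu_nonneg[OF q0])
    finally show ?thesis .
  qed
qed



definition Zs :: "(nat \<Rightarrow> real) \<Rightarrow> real \<Rightarrow> nat \<Rightarrow> real" where
  "Zs p s M = (\<Sum>i\<in>{1..M}. p i powr s)"
definition qs :: "(nat \<Rightarrow> real) \<Rightarrow> real \<Rightarrow> nat \<Rightarrow> nat \<Rightarrow> real" where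
  "qs p s M i = p i powr s / Zs p s M"
definition pmin :: "(nat \<Rightarrow> real) \<Rightarrow> nat \<Rightarrow> real" where
  "pmin p M = Min (p ` {1..M})"
definition CC :: "(nat \<Rightarrow> real) \<Rightarrow> real \<Rightarrow> nat \<Rightarrow> real" where
  "CC p s M = 4 * pmin p M powr (s - 1)"
definition stopw :: "(nat \<Rightarrow> real) \<Rightarrow> real \<Rightarrow> nat list \<Rightarrow> bool" where
  "stopw p d w \<longleftrightarrow> w \<noteq> [] \<and> pw p w \<le> d \<and> d < pw p (butlast w)"

context fixes p :: "nat \<Rightarrow> real" and s :: real and M :: nat
  assumes P: "prob_supported_by_N p" and s0: "0 < s" and s1: "s < 1" and M: "1 \<le> M"
    and Z: "1 \<le> Zs p s M"
begin

lemma pmin_pos: "0 < pmin p M"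
  unfolding pmin_def using M by (subst Min_gr_iff) (auto intro: p_pos[OF P])
lemma pmin_le: "1 \<le> i \<Longrightarrow> i \<le> M \<Longrightarrow> pmin p M \<le> p i"
  unfolding pmin_def by (rule Min_le) auto

lemma qM0: "0 \<le> qM p M" "qM p M < 1"
  using qM_ge[OF P, of 1 M] p_pos[OF P, of 1] M qM_lt1[OF P M] by auto

lemma pw_qM: "set w \<subseteq> {1..M} \<Longrightarrow> pw p w \<le> qM p M ^ length w"
proof (induction w)
  case Nil then show ?case by simp
next
  case (Cons x w)
  have "0 \<le> pw p w" using pw_pos[OF P, of w] Cons.prems by force
  then have "p x * pw p w \<le> qM p M * qM p M ^ length w"
    using Cons qM_ge[OF P, of x M] pw_pos[OF P, of w] p_nonneg[OF P, of x] qM0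
    by (intro mult_mono) auto
  then show ?case by simp
qed

lemma word_ge1: "set w \<subseteq> {1..M} \<Longrightarrow> \<forall>x\<in>set w. 1 \<le> x" by auto

lemma small_power: "0 < e \<Longrightarrow> \<exists>L. qM p M ^ L < e"
proof -
  assume e: "0 < e"
  have "(\<lambda>n. qM p M ^ n) \<longlonglongrightarrow> 0" using qM0 by (intro LIMSEQ_power_zero) auto
  then have "\<forall>\<^sub>F n in sequentially. qM p M ^ n < e" using e by (rule order_tendstoD)
  then show ?thesis by (meson eventually_sequentially order_refl)
qed

lemma stop_exists:
  assumes pa: "dpath M om" and d: "0 < d" "d < 1"
  shows "\<exists>k. stopw p d (pre om k)"
proof -
  have sw: "set (pre om k) \<subseteq> {1..M}" for k using path_pre[OF P pa] by auto
  obtain L where L: "qM p M ^ L < d" using small_power d by blast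
  have ex: "pw p (pre om L) \<le> d" using pw_qM[OF sw, of L] L by (simp add: pre_def)
  define k where "k = (LEAST k. pw p (pre om k) \<le> d)"
  have k1: "pw p (pre om k) \<le> d" unfolding k_def by (rule LeastI[of _ L]) (rule ex)
  have "k \<noteq> 0"
  proof
    assume "k = 0" then show False using k1 d by (simp add: pre_def)
  qed
  then obtain m where m: "k = Suc m" by (cases k) auto
  have "\<not> pw p (pre om m) \<le> d" using not_less_Least[of m "\<lambda>k. pw p (pre om k) \<le> d"] m k_def by simp
  moreover have "butlast (pre om k) = pre om m" "pre om k \<noteq> []" using m by (simp_all add: pre_Suc2)
  ultimately have "stopw p d (pre om k)" using k1 unfolding stopw_def by simp
  then show ?thesis by blast
qed

lemma stop_parallel:
  assumes "stopw p d w" "stopw p d w'" "w \<noteq> w'" "set w \<subseteq> {1..M}" "set w' \<subseteq> {1..M}"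
  shows "w \<parallel> w'"
proof -
  have np: "\<not> prefix u v" if a: "stopw p d u" "stopw p d v" "u \<noteq> v" "set u \<subseteq> {1..M}" "set v \<subseteq> {1..M}" for u v
  proof
    assume "prefix u v"
    then obtain t where t0: "v = u @ t" by (auto elim: prefixE)
    have t: "v = u @ t" "t \<noteq> []" using t0 a(3) by auto
    then have bl: "butlast v = u @ butlast t" by (simp add: butlast_append)
    have "set (butlast t) \<subseteq> {1..M}" using a(5) t by (auto dest: in_set_butlastD)
    then have "pw p (butlast t) \<le> 1" using pw_le1[OF P] by force
    moreover have "0 \<le> pw p u" using pw_pos[OF P, of u] a(4) by force
    ultimately have "pw p (butlast v) \<le> pw p u" unfolding bl pw_append
      by (simp add: mult_left_le)
    then show False using a(1,2) unfolding stopw_def by linarith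
  qed
  have "\<not> prefix w w'" using np[OF assms(1,2,3,4,5)] .
  moreover have "\<not> prefix w' w" using np[OF assms(2,1) _ assms(5,4)] assms(3) by auto
  ultimately show ?thesis unfolding parallel_def by blast
qed

lemma stop_lower:
  assumes "stopw p d w" "set w \<subseteq> {1..M}" "0 < d"
  shows "pmin p M * d \<le> pw p w"
proof -
  have w: "w = butlast w @ [last w]" using assms(1) by (simp add: stopw_def)
  have "last w \<in> set w" using assms(1) by (simp add: stopw_def)
  then have "last w \<in> {1..M}" using assms(2) by blast
  then have pl: "pmin p M \<le> p (last w)" using pmin_le by auto
  have "pw p w = pw p (butlast w) * p (last w)" by (subst w) (simp add: pw_append)
  moreover have "d < pw p (butlast w)" using assms(1) by (simp add: stopw_def)
  moreover have "d * pmin p M \<le> pw p (butlast w) * p (last w)"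
    using pl pmin_pos assms(3) \<open>d < pw p (butlast w)\<close> by (intro mult_mono) auto
  ultimately show ?thesis by (simp add: mult.commute)
qed

lemma stop_finite: "0 < d \<Longrightarrow> finite {w. set w \<subseteq> {1..M} \<and> stopw p d w}"
proof -
  assume d: "0 < d"
  obtain L where L: "qM p M ^ L < pmin p M * d" using small_power[of "pmin p M * d"] pmin_pos d by auto
  have "{w. set w \<subseteq> {1..M} \<and> stopw p d w} \<subseteq> {w. set w \<subseteq> {1..M} \<and> length w \<le> L}"
  proof safe
    fix w assume w: "set w \<subseteq> {1..M}" "stopw p d w"
    show "length w \<le> L"
    proof (rule ccontr)
      assume "\<not> length w \<le> L"
      then have "qM p M ^ length w \<le> qM p M ^ L" using qM0 by (intro power_decreasing) auto
      then show False using pw_qM[OF w(1)] stop_lower[OF w(2,1) d] L by linarith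
    qed
  qed
  then show ?thesis using finite_lists_length_le[of "{1..M}" L] finite_subset by blast
qed

lemma Zpos: "0 < Zs p s M" using Z by linarith

lemma q_nonneg: "0 \<le> qs p s M i" unfolding qs_def using Zpos by simp

lemma q_sum: "(\<Sum>i\<in>{1..M}. qs p s M i) = 1"
  unfolding qs_def using Zpos by (simp add: sum_divide_distrib[symmetric] Zs_def)

lemma mu_le: "set w \<subseteq> {1..M} \<Longrightarrow> mu (qs p s M) w \<le> pw p w powr s"
proof (induction w)
  case Nil then show ?case by simp
next
  case (Cons x w)
  have x: "1 \<le> x" using Cons by auto
  have "p x powr s / Zs p s M \<le> p x powr s / 1"
    by (rule divide_left_mono) (use Z in auto)
  then have qx: "qs p s M x \<le> p x powr s" unfolding qs_def by simp
  have m1: "mu (qs p s M) w \<le> pw p w powr s" using Cons.IH Cons.prems by simp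
  have "qs p s M x * mu (qs p s M) w \<le> p x powr s * pw p w powr s"
    by (rule mult_mono[OF qx m1]) (auto intro: mu_nonneg q_nonneg)
  then have "mu (qs p s M) (x # w) \<le> p x powr s * pw p w powr s" by simp
  also have "\<dots> = (p x * pw p w) powr s"
  proof -
    have h1: "0 \<le> p x" using p_nonneg[OF P, of x] x by simp
    have "\<forall>y\<in>set w. 1 \<le> y" using Cons.prems by auto
    then have h2: "0 \<le> pw p w" using pw_pos[OF P, of w] by simp
    show ?thesis using powr_mult[of "p x" "pw p w" s] h1 h2 by simp
  qed
  also have "\<dots> = pw p (x # w) powr s" by simp
  finally show ?case .
qed


lemma set_bound:
  assumes U: "bounded U" "diameter U \<le> d" and d: "0 < d" "d < 1"
  shows "(\<Sum>w\<in>{w. set w \<subseteq> {1..M} \<and> stopw p d w \<and> (\<exists>y\<in>U. aw p w \<le> y \<and> y \<le> aw p w + pw p w)}.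
            mu (qs p s M) w) \<le> CC p s M * d powr s"
    (is "sum _ ?S \<le> _")
proof -
  have fin: "finite ?S" by (rule finite_subset[OF _ stop_finite[OF d(1)]]) auto
  have c0: "0 \<le> CC p s M * d powr s" unfolding CC_def by simp
  show ?thesis
  proof (cases "U = {}")
    case True then show ?thesis using c0 by simp
  next
    case False
    then obtain u0 where u0: "u0 \<in> U" by blast
    have pack: "(\<Sum>w\<in>?S. (aw p w + pw p w) - aw p w) \<le> (u0 + 2 * d) - (u0 - 2 * d)"
    proof (rule packing[OF fin])
      show "\<forall>w\<in>?S. aw p w < aw p w + pw p w"
      proof
        fix w assume "w \<in> ?S"
        then have sw: "set w \<subseteq> {1..M}" by blast
        have "0 < pw p w" using pw_pos[OF P word_ge1[OF sw]] .
        then show "aw p w < aw p w + pw p w" by simp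
      qed
      show "\<forall>w\<in>?S. \<forall>w'\<in>?S. w \<noteq> w' \<longrightarrow> aw p w + pw p w \<le> aw p w' \<or> aw p w' + pw p w' \<le> aw p w"
      proof (intro ballI impI)
        fix w w' assume w: "w \<in> ?S" "w' \<in> ?S" "w \<noteq> w'"
        then have "w \<parallel> w'" using stop_parallel[of d w w'] by blast
        moreover have "\<forall>x\<in>set w. 1 \<le> x" "\<forall>x\<in>set w'. 1 \<le> x" using w by auto
        ultimately show "aw p w + pw p w \<le> aw p w' \<or> aw p w' + pw p w' \<le> aw p w"
          using cyl_order[OF P] by blast
      qed
      show "\<forall>w\<in>?S. u0 - 2 * d \<le> aw p w \<and> aw p w + pw p w \<le> u0 + 2 * d"
      proof
        fix w assume w: "w \<in> ?S"
        then obtain y where y: "y \<in> U" "aw p w \<le> y" "y \<le> aw p w + pw p w" by blast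
        have "dist u0 y \<le> d" using diameter_bounded_bound[OF U(1) u0 y(1)] U(2) by linarith
        moreover have "pw p w \<le> d" using w by (simp add: stopw_def)
        ultimately show "u0 - 2 * d \<le> aw p w \<and> aw p w + pw p w \<le> u0 + 2 * d"
          using y by (auto simp: dist_real_def)
      qed
      show "u0 - 2 * d \<le> u0 + 2 * d" using d by simp
    qed
    have "sum (mu (qs p s M)) ?S \<le> (\<Sum>w\<in>?S. pw p w * (pmin p M * d) powr (s - 1))"
    proof (rule sum_mono)
      fix w assume w: "w \<in> ?S"
      have sw: "set w \<subseteq> {1..M}" using w by blast
      have pp: "0 < pw p w" using pw_pos[OF P word_ge1[OF sw]] .
      have "pmin p M * d \<le> pw p w" using stop_lower w d by blast
      then have i1: "pw p w powr (s - 1) \<le> (pmin p M * d) powr (s - 1)"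
        using s1 pmin_pos d by (intro powr_mono2') auto
      have "pw p w powr s = pw p w powr (1 + (s - 1))" by simp
      also have "\<dots> = pw p w * pw p w powr (s - 1)"
        by (simp only: powr_add) (use pp in simp)
      also have "\<dots> \<le> pw p w * (pmin p M * d) powr (s - 1)"
        by (rule mult_left_mono[OF i1]) (use pp in simp)
      finally have i2: "pw p w powr s \<le> pw p w * (pmin p M * d) powr (s - 1)" .
      show "mu (qs p s M) w \<le> pw p w * (pmin p M * d) powr (s - 1)"
        using mu_le[OF sw] i2 by linarith
    qed
    also have "\<dots> = (\<Sum>w\<in>?S. pw p w) * (pmin p M * d) powr (s - 1)"
      by (simp add: sum_distrib_right)
    also have "\<dots> \<le> (4 * d) * (pmin p M * d) powr (s - 1)"
      using pack by (intro mult_right_mono) auto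
    also have "\<dots> = 4 * pmin p M powr (s - 1) * (d * d powr (s - 1))"
    proof -
      have "(pmin p M * d) powr (s - 1) = pmin p M powr (s - 1) * d powr (s - 1)"
        using powr_mult[of "pmin p M" d "s - 1"] pmin_pos d by simp
      then show ?thesis by (simp add: algebra_simps)
    qed
    also have "d * d powr (s - 1) = d powr s"
    proof -
      have "d powr s = d powr (1 + (s - 1))" by simp
      also have "\<dots> = d * d powr (s - 1)" by (simp only: powr_add) (use d in simp)
      finally show ?thesis by simp
    qed
    also have "4 * pmin p M powr (s - 1) * d powr s = CC p s M * d powr s"
      unfolding CC_def by simp
    finally show ?thesis .
  qed
qed

end


context fixes p :: "nat \<Rightarrow> real" and s :: real and M :: nat
  assumes P: "prob_supported_by_N p" and s0: "0 < s" and s1: "s < 1" and M: "1 \<le> M"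
    and Z: "1 \<le> Zs p s M"
begin

lemma cover_bound:
  assumes Ub: "\<forall>i. bounded (U i)"
    and dd: "\<forall>i. diameter (U i) \<le> d' i \<and> 0 < d' i \<and> d' i < 1"
    and cov: "pi_p p ` {om. dpath M om} \<subseteq> (\<Union>i. U i)"
  shows "\<exists>F. finite F \<and> 1 \<le> CC p s M * (\<Sum>i\<in>F. d' i powr s)"
proof -
  define S where "S i = {w. set w \<subseteq> {1..M} \<and> stopw p (d' i) w \<and>
      (\<exists>y\<in>U i. aw p w \<le> y \<and> y \<le> aw p w + pw p w)}" for i
  have covS: "\<forall>om. dpath M om \<longrightarrow> (\<exists>k. pre om k \<in> (\<Union>i. S i))"
  proof (intro allI impI)
    fix om assume pa: "dpath M om"
    then obtain i where i: "pi_p p om \<in> U i" using cov by blast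
    obtain k where k: "stopw p (d' i) (pre om k)"
      using stop_exists[OF P s0 s1 M Z pa] dd by blast
    have "set (pre om k) \<subseteq> {1..M}" using path_pre[OF P pa] by auto
    then have "pre om k \<in> S i" unfolding S_def using k i pi_in_cyl[OF P pa, of k] by blast
    then show "\<exists>k. pre om k \<in> (\<Union>i. S i)" by blast
  qed
  obtain S0 where S0: "S0 \<subseteq> (\<Union>i. S i)" "finite S0" "\<forall>om. dpath M om \<longrightarrow> (\<exists>k. pre om k \<in> S0)"
    using fan[OF P covS] by blast
  have "\<forall>w\<in>S0. \<exists>i. w \<in> S i" using S0(1) by blast
  then obtain idx where idx: "\<forall>w\<in>S0. w \<in> S (idx w)" by metis
  define F where "F = idx ` S0"
  have fS: "finite (S i)" for i
    by (rule finite_subset[OF _ stop_finite[OF P s0 s1 M Z]]) (use dd in \<open>auto simp: S_def\<close>)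
  have qn: "\<forall>i. 0 \<le> qs p s M i" using q_nonneg[OF P s0 s1 M Z] by blast
  have "1 \<le> (\<Sum>w\<in>S0. mu (qs p s M) w)"
    by (rule sum_cover[OF qn q_sum[OF P s0 s1 M Z] M S0(2) _ S0(3), of "Max (length ` S0)"])
       (use S0(2) in auto)
  also have "\<dots> = (\<Sum>i\<in>F. \<Sum>w\<in>{w\<in>S0. idx w = i}. mu (qs p s M) w)"
    unfolding F_def by (rule sum.image_gen[OF S0(2)])
  also have "\<dots> \<le> (\<Sum>i\<in>F. \<Sum>w\<in>S i. mu (qs p s M) w)"
    by (rule sum_mono, rule sum_mono2[OF fS]) (use idx mu_nonneg[OF qn] in auto)
  also have "\<dots> \<le> (\<Sum>i\<in>F. CC p s M * d' i powr s)"
    by (rule sum_mono) (unfold S_def, rule set_bound[OF P s0 s1 M Z], use Ub dd in auto)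
  also have "\<dots> = CC p s M * (\<Sum>i\<in>F. d' i powr s)" by (simp add: sum_distrib_left)
  finally show ?thesis using S0(2) F_def by blast
qed

end

lemma sum_shift1: "(\<Sum>i\<in>{1..M}. f i) = (\<Sum>i<M. f (Suc i))"
  by (induction M) (auto simp: atLeastAtMostSuc_conv add.commute)

lemma geo_half: "(\<Sum>i<n. (1/2::real) ^ Suc i) = 1 - (1/2) ^ n"
  by (induction n) auto

context fixes p :: "nat \<Rightarrow> real" assumes P: "prob_supported_by_N p"
begin

lemma choose_M:
  assumes s0: "0 < s" and s1: "s < 1"
  shows "\<exists>M. 1 \<le> M \<and> 1 \<le> Zs p s M"
proof -
  define g where "g = p 1 powr s - p 1"
  have p1: "0 < p 1" "p 1 < 1" using p_pos[OF P, of 1] p_lt1[OF P, of 1] by auto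
  have "p 1 powr 1 < p 1 powr s" using powr_less_mono'[OF p1 s1] .
  then have g: "0 < g" using p1 unfolding g_def by simp
  have "(\<lambda>i. p (Suc i)) sums 1" using P unfolding prob_supported_by_N_def by auto
  then have "(\<lambda>n. \<Sum>i<n. p (Suc i)) \<longlonglongrightarrow> 1" by (simp add: sums_def)
  then have "\<forall>\<^sub>F n in sequentially. 1 - g < (\<Sum>i<n. p (Suc i))"
    using g by (intro order_tendstoD) auto
  then obtain N where N: "\<forall>n\<ge>N. 1 - g < (\<Sum>i<n. p (Suc i))"
    by (auto simp: eventually_sequentially)
  define M where "M = Suc N"
  have a: "1 - g < (\<Sum>i<M. p (Suc i))" using N[rule_format, of "Suc N"] unfolding M_def by simp
  have b: "(\<Sum>i<M. if i = 0 then g else 0) = g" unfolding M_def by (simp add: sum.delta)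
  have "1 - g + g < (\<Sum>i<M. p (Suc i)) + (\<Sum>i<M. if i = 0 then g else 0)"
    using a b by linarith
  also have "\<dots> = (\<Sum>i<M. p (Suc i) + (if i = 0 then g else 0))" by (simp add: sum.distrib)
  also have "\<dots> \<le> (\<Sum>i<M. p (Suc i) powr s)"
  proof (rule sum_mono)
    fix i assume "i \<in> {..<M}"
    have "p (Suc i) powr 1 \<le> p (Suc i) powr s"
      using p_pos[OF P, of "Suc i"] p_lt1[OF P, of "Suc i"] s1 by (intro powr_mono') auto
    then show "p (Suc i) + (if i = 0 then g else 0) \<le> p (Suc i) powr s"
      using p_pos[OF P, of "Suc i"] g_def by auto
  qed
  finally show ?thesis unfolding Zs_def sum_shift1 M_def by (intro exI[of _ "Suc N"]) auto
qed

lemma bseq_path: "dpath M om \<Longrightarrow> om \<in> bounded_seqs"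
  unfolding bounded_seqs_def seqN_def dpath_def by auto

lemma bseq_path2: "om \<in> bounded_seqs \<Longrightarrow> \<exists>M. dpath M om"
  unfolding bounded_seqs_def seqN_def dpath_def by auto

lemma lower_bound:
  assumes s0: "0 < s" and s1: "s < 1"
  shows "hausdorff_measure s (pi_p p ` bounded_seqs) \<noteq> 0"
proof -
  obtain M where M: "1 \<le> M" "1 \<le> Zs p s M" using choose_M[OF s0 s1] by blast
  define C where "C = CC p s M"
  have pm: "0 < pmin p M" "pmin p M < 1"
    using pmin_pos[OF P s0 s1 M] pmin_le[OF P s0 s1 M, of 1] p_lt1[OF P, of 1] M by auto
  have "1 < pmin p M powr (s - 1)"
    using powr_less_mono'[OF pm, of "s - 1" 0] s1 pm by simp
  then have C4: "4 < C" unfolding C_def CC_def by simp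
  define t where "t = 1 / (2 * C)"
  have t: "0 < t" "t < 1" "C * t = 1/2" using C4 unfolding t_def by auto
  define c where "c = 1 / (2 * C)"
  have c: "0 < c" unfolding c_def using C4 by simp
  have hd: "ennreal c \<le> hausdorff_delta s (1/2) (pi_p p ` bounded_seqs)"
    unfolding hausdorff_delta_def
  proof (rule INF_greatest, clarify)
    fix U :: "nat \<Rightarrow> real set"
    assume cov: "pi_p p ` bounded_seqs \<subseteq> (\<Union>i. U i)"
      and Ub: "\<forall>i. bounded (U i) \<and> diameter (U i) \<le> 1/2"
    define eta where "eta i = (t * (1/2) ^ Suc i) powr (1/s)" for i
    define d' where "d' i = max (diameter (U i)) (eta i)" for i
    have tpos: "0 < t * (1/2) ^ Suc i" "t * (1/2) ^ Suc i < 1" for i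
    proof -
      show "0 < t * (1/2) ^ Suc i" using t by simp
      have h: "(1/2::real) ^ Suc i \<le> 1" by (rule power_le_one) auto
      have "t * (1/2::real) ^ Suc i \<le> t * 1" using t by (intro mult_left_mono[OF h]) auto
      then show "t * (1/2) ^ Suc i < 1" using t(2) by linarith
    qed
    have eta: "0 < eta i" "eta i < 1" "eta i powr s = t * (1/2) ^ Suc i" for i
    proof -
      show "0 < eta i" unfolding eta_def using tpos[of i] t by simp
      show "eta i < 1" unfolding eta_def using tpos[of i] s0 by (subst powr01_less_one) (auto simp del: power_Suc)
      show "eta i powr s = t * (1/2) ^ Suc i" unfolding eta_def using tpos[of i] s0
        by (simp add: powr_powr del: power_Suc)
    qed
    have dd: "\<forall>i. diameter (U i) \<le> d' i \<and> 0 < d' i \<and> d' i < 1"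
    proof
      fix i
      have a: "0 < eta i" "eta i < 1" using eta by auto
      have b: "diameter (U i) \<le> 1/2" using Ub by auto
      show "diameter (U i) \<le> d' i \<and> 0 < d' i \<and> d' i < 1"
        using a b by (cases "diameter (U i) \<le> eta i") (auto simp: d'_def)
    qed
    have covK: "pi_p p ` {om. dpath M om} \<subseteq> (\<Union>i. U i)"
      using cov bseq_path by blast
    obtain F where F: "finite F" "1 \<le> C * (\<Sum>i\<in>F. d' i powr s)"
      using cover_bound[OF P s0 s1 M(1) M(2), of U d'] Ub dd covK unfolding C_def by blast
    have dle: "d' i powr s \<le> diameter (U i) powr s + t * (1/2) ^ Suc i" for i
    proof -
      have a: "eta i powr s = t * (1/2) ^ Suc i" using eta by blast
      have b: "0 \<le> t * (1/2::real) ^ Suc i" "0 \<le> diameter (U i) powr s" using t by auto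
      show ?thesis
      proof (cases "diameter (U i) \<le> eta i")
        case True
        then have "d' i = eta i" by (simp add: d'_def)
        then have "d' i powr s = t * (1/2) ^ Suc i" using a by (simp del: power_Suc)
        then show ?thesis using b by linarith
      next
        case False
        then have "d' i powr s = diameter (U i) powr s" by (simp add: d'_def)
        then show ?thesis using b by linarith
      qed
    qed
    obtain n where n: "F \<subseteq> {..<n}"
      using F(1) by (meson finite_nat_iff_bounded)
    have "(\<Sum>i\<in>F. (1/2::real) ^ Suc i) \<le> (\<Sum>i<n. (1/2) ^ Suc i)"
      by (rule sum_mono2) (use n in auto)
    also have "\<dots> \<le> 1" unfolding geo_half by simp
    finally have geo: "(\<Sum>i\<in>F. (1/2::real) ^ Suc i) \<le> 1" .
    have "(\<Sum>i\<in>F. d' i powr s) \<le> (\<Sum>i\<in>F. diameter (U i) powr s + t * (1/2) ^ Suc i)"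
      by (rule sum_mono) (rule dle)
    also have "\<dots> = (\<Sum>i\<in>F. diameter (U i) powr s) + t * (\<Sum>i\<in>F. (1/2) ^ Suc i)"
      by (simp only: sum.distrib sum_distrib_left)
    also have "\<dots> \<le> (\<Sum>i\<in>F. diameter (U i) powr s) + t * 1"
      using mult_left_mono[OF geo, of t] t by linarith
    finally have X: "(\<Sum>i\<in>F. d' i powr s) \<le> (\<Sum>i\<in>F. diameter (U i) powr s) + t" by simp
    have "C * (\<Sum>i\<in>F. d' i powr s) \<le> C * ((\<Sum>i\<in>F. diameter (U i) powr s) + t)"
      using X C4 by (intro mult_left_mono) auto
    then have "1 \<le> C * (\<Sum>i\<in>F. diameter (U i) powr s) + C * t"
      using F(2) by (simp add: distrib_left)
    then have "1 / 2 \<le> C * (\<Sum>i\<in>F. diameter (U i) powr s)" using t(3) by linarith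
    then have Fs: "c \<le> (\<Sum>i\<in>F. diameter (U i) powr s)"
      using C4 unfolding c_def by (simp add: field_simps)
    have "ennreal c \<le> ennreal (\<Sum>i\<in>F. diameter (U i) powr s)"
      using Fs by (simp add: ennreal_leI)
    also have "\<dots> = (\<Sum>i\<in>F. ennreal (diameter (U i) powr s))"
      by (rule sum_ennreal[symmetric]) simp
    also have "\<dots> \<le> (\<Sum>i<n. ennreal (diameter (U i) powr s))"
      by (rule sum_mono2) (use n in auto)
    also have "\<dots> \<le> (\<Sum>i. ennreal (diameter (U i) powr s))"
      by (rule sum_le_suminf) auto
    finally show "ennreal c \<le> (\<Sum>i. ennreal (diameter (U i) powr s))" .
  qed
  have "hausdorff_delta s (1/2) (pi_p p ` bounded_seqs) \<le> hausdorff_measure s (pi_p p ` bounded_seqs)"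
    unfolding hausdorff_measure_def by (rule SUP_upper) simp
  then show ?thesis using hd c by (metis ennreal_eq_0_iff le_zero_eq not_le)
qed

end


lemma upper_bound:
  fixes E :: "real set"
  assumes E: "E \<subseteq> {0..1}" and s: "1 < s"
  shows "hausdorff_measure s E = 0"
proof -
  have hd0: "hausdorff_delta s \<delta> E = 0" if d: "0 < \<delta>" for \<delta>
  proof -
    have "hausdorff_delta s \<delta> E \<le> 0 + ennreal e" if e: "0 < e" for e
    proof -
      have "((\<lambda>n. real n powr (1 - s)) \<longlongrightarrow> 0) sequentially"
        using s by (intro tendsto_neg_powr filterlim_real_sequentially) auto
      then have ev1: "\<forall>\<^sub>F n in sequentially. real n powr (1 - s) < e"
        using e by (rule order_tendstoD)
      have "\<forall>Z. \<forall>\<^sub>F n in sequentially. Z \<le> real n"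
        using filterlim_real_sequentially by (simp add: filterlim_at_top)
      then have ev2: "\<forall>\<^sub>F n in sequentially. max 1 (1 / \<delta>) \<le> real n" by blast
      have "\<forall>\<^sub>F n in sequentially. real n powr (1 - s) < e \<and> max 1 (1 / \<delta>) \<le> real n"
        using ev1 ev2 by (rule eventually_conj)
      then obtain N where N: "\<forall>n\<ge>N. real n powr (1 - s) < e \<and> max 1 (1 / \<delta>) \<le> real n"
        unfolding eventually_sequentially by blast
      obtain n where n: "real n powr (1 - s) < e" "max 1 (1 / \<delta>) \<le> real n"
        using N[rule_format, OF order_refl] by blast
      have n1: "1 \<le> n" using n(2) by simp
      have nd: "1 / real n \<le> \<delta>" using n(2) d n1 by (simp add: field_simps)
      define U where "U i = (if i < n then {real i / n .. real (Suc i) / n} else {})" for i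
      have diamU: "diameter (U i) = (if i < n then 1 / real n else 0)" for i
        unfolding U_def using n1 by (auto simp: diameter_closed_interval divide_simps)
      have cov: "E \<subseteq> (\<Union>i. U i)"
      proof
        fix x assume "x \<in> E"
        then have x: "0 \<le> x" "x \<le> 1" using E by auto
        show "x \<in> (\<Union>i. U i)"
        proof (cases "x = 1")
          case True
          then have "x \<in> U (n - 1)" unfolding U_def using n1 by (auto simp: of_nat_diff divide_simps)
          then show ?thesis by blast
        next
          case False
          define i where "i = nat \<lfloor>x * n\<rfloor>"
          have fl: "real i \<le> x * n" "x * n < real i + 1"
            unfolding i_def using x by (auto simp: of_nat_nat)
          have "x * n < n" using False x n1 by simp
          then have "i < n" using fl unfolding i_def by linarith
          then have "x \<in> U i" unfolding U_def using fl n1 by (auto simp: divide_simps)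
          then show ?thesis by blast
        qed
      qed
      have inS: "U \<in> {U :: nat \<Rightarrow> real set. E \<subseteq> (\<Union>i. U i) \<and> (\<forall>i. bounded (U i) \<and> diameter (U i) \<le> \<delta>)}"
        using cov diamU nd d by (auto simp: U_def)
      have "(\<Sum>i. ennreal (diameter (U i) powr s)) = (\<Sum>i<n. ennreal (diameter (U i) powr s))"
        by (rule suminf_finite) (auto simp: diamU)
      also have "\<dots> = (\<Sum>i<n. ennreal ((1 / real n) powr s))" by (simp add: diamU)
      also have "\<dots> = ennreal (real n * (1 / real n) powr s)" by (subst sum_ennreal) auto
      also have "real n * (1 / real n) powr s = real n powr (1 - s)"
        using n1 by (simp add: powr_divide powr_diff)
      finally have "(\<Sum>i. ennreal (diameter (U i) powr s)) \<le> ennreal e"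
        using n(1) by (simp add: ennreal_leI)
      moreover have "hausdorff_delta s \<delta> E \<le> (\<Sum>i. ennreal (diameter (U i) powr s))"
        unfolding hausdorff_delta_def by (rule INF_lower[OF inS])
      ultimately show ?thesis by simp
    qed
    then have "hausdorff_delta s \<delta> E \<le> 0"
      by (rule ennreal_le_epsilon)
    then show ?thesis by simp
  qed
  show ?thesis unfolding hausdorff_measure_def using hd0
    by (metis (no_types, lifting) SUP_least greaterThan_iff le_zero_eq)
qed

theorem corollary1:
  fixes p :: "nat \<Rightarrow> real"
  assumes "prob_supported_by_N p"
  shows "hausdorff_dim (pi_p p ` bounded_seqs) = 1"
proof -
  note P = assms
  define E where "E = pi_p p ` bounded_seqs"
  define A where "A = {s. s > 0 \<and> hausdorff_measure s E = 0}"
  have E01: "E \<subseteq> {0..1}"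
  proof
    fix x assume "x \<in> E"
    then obtain om where om: "om \<in> bounded_seqs" "x = pi_p p om" unfolding E_def by blast
    then obtain M where "dpath M om" using bseq_path2[OF P] by blast
    then show "x \<in> {0..1}" using pi_bounds[OF P] om by auto
  qed
  have A1: "s \<in> A" if "1 < s" for s
    unfolding A_def using upper_bound[OF E01 that] that by simp
  have A2: "1 \<le> s" if "s \<in> A" for s
  proof (rule ccontr)
    assume "\<not> 1 \<le> s"
    then show False using lower_bound[OF P, of s] that unfolding A_def E_def by auto
  qed
  have ne: "A \<noteq> {}" using A1[of 2] by auto
  have bdd: "bdd_below A" using A2 by (intro bdd_belowI[where m=1]) auto
  have "1 \<le> Inf A" by (rule cInf_greatest[OF ne]) (use A2 in auto)
  moreover have "Inf A \<le> 1"
  proof (rule field_le_epsilon)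
    fix e :: real assume "0 < e"
    then show "Inf A \<le> 1 + e" using cInf_lower[OF A1 bdd, of "1 + e"] by simp
  qed
  ultimately show ?thesis unfolding hausdorff_dim_def A_def E_def by simp
qed


end
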